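(* Let $V$ be a verifier with randomness complexity $r(n)=O(\log n)$ and query complexity $q(n)=O(1)$, let $x\in\{0,1\}^n$, and let $\pi^{\mathsf{start}}(x),\pi^{\mathsf{goal}}(x)\in\{0,1\}^{\mathrm{poly}(n)}$ be two proofs that $V(x)$ accepts with probability $1$. Then there always exists a reconfiguration sequence $(\pi^{(1)},\ldots,\pi^{(T)})$ from $\pi^{\mathsf{start}}(x)$ to $\pi^{\mathsf{goal}}(x)$ over $\{0,1\}^{\mathrm{poly}(n)}$ such that \[\Pr_{t\sim\{1,\ldots,T\},\,(I,D)\sim V(x)}\bigl[D(\pi^{(t)}|_I)=1\bigr] > 1-\frac{1}{2^{\Omega(n)}},\] where $t$ is uniform and independent of the random bits of $V$.
   Context: A verifier with randomness complexity $r$ and query complexity $q$ is a probabilistic polynomial-time algorithm $V$ that, on input $x$, tosses $r(|x|)$ random bits and generates from them a tuple of $q(|x|)$ positions $I$ and a circuit $D\colon\{0,1\}^{q}\to\{0,1\}$; $(I,D)\sim V(x)$ denotes this random pair, and $V$ accepts proof $\pi$ (for a given choice of randomness) when $D(\pi|_I)=1$, $\pi|_I$ being the restriction of $\pi$ to positions $I$. A reconfiguration sequence from $\pi^{\mathsf{start}}$ to $\pi^{\mathsf{goal}}$ over $\{0,1\}^m$ is a finite sequence of strings in $\{0,1\}^m$ starting at $\pi^{\mathsf{start}}$, ending at $\pi^{\mathsf{goal}}$, with consecutive strings differing in at most one bit. *)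

theory Defs
  imports Complex_Main
begin

text \<open>A verifier is modelled as a function taking the
input x and the random string (of length r |x|) to a pair (I, D): a list of queried
proof positions and a decision predicate on the restricted proof.\<close>

type_synonym verifier = "bool list \<Rightarrow> bool list \<Rightarrow> nat list \<times> (bool list \<Rightarrow> bool)"

definition restrict :: "bool list \<Rightarrow> nat list \<Rightarrow> bool list" where
  "restrict \<pi> I = map (\<lambda>i. \<pi> ! i) I"

definition rand_strings :: "nat \<Rightarrow> bool list set" where
  "rand_strings k = {\<rho>. length \<rho> = k}"

definition wf_verifier :: "verifier \<Rightarrow> (nat \<Rightarrow> nat) \<Rightarrow> (nat \<Rightarrow> nat) \<Rightarrow> (nat \<Rightarrow> nat) \<Rightarrow> bool" where
  "wf_verifier V r q l \<longleftrightarrow>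
     (\<forall>x. \<forall>\<rho> \<in> rand_strings (r (length x)).
        length (fst (V x \<rho>)) = q (length x) \<and>
        (\<forall>i \<in> set (fst (V x \<rho>)). i < l (length x)))"

definition acc_prob :: "verifier \<Rightarrow> (nat \<Rightarrow> nat) \<Rightarrow> bool list \<Rightarrow> bool list \<Rightarrow> real" where
  "acc_prob V r x \<pi> =
     real (card {\<rho> \<in> rand_strings (r (length x)). snd (V x \<rho>) (restrict \<pi> (fst (V x \<rho>)))})
     / 2 ^ r (length x)"

text \<open>Pr_{t ~ {1..T}, (I,D) ~ V(x)} [D(pi^(t)|_I) = 1], t uniform and independent
of V's randomness (the list index t ranges over 0..T-1).\<close>
definition seq_acc_prob :: "verifier \<Rightarrow> (nat \<Rightarrow> nat) \<Rightarrow> bool list \<Rightarrow> bool list list \<Rightarrow> real" where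
  "seq_acc_prob V r x ps =
     real (card {(t, \<rho>). t < length ps \<and> \<rho> \<in> rand_strings (r (length x)) \<and>
                 snd (V x \<rho>) (restrict (ps ! t) (fst (V x \<rho>)))})
     / (real (length ps) * 2 ^ r (length x))"

definition hamming :: "bool list \<Rightarrow> bool list \<Rightarrow> nat" where
  "hamming a b = card {i. i < length a \<and> a ! i \<noteq> b ! i}"

definition reconf_seq :: "nat \<Rightarrow> bool list \<Rightarrow> bool list \<Rightarrow> bool list list \<Rightarrow> bool" where
  "reconf_seq m s g ps \<longleftrightarrow>
     ps \<noteq> [] \<and> hd ps = s \<and> last ps = g \<and>
     (\<forall>p \<in> set ps. length p = m) \<and>
     (\<forall>t. Suc t < length ps \<longrightarrow> hamming (ps ! t) (ps ! Suc t) \<le> 1)"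

end

theory Submission
  imports Defs
begin

lemma rand_fin: "finite (rand_strings k)"
proof -
  have "rand_strings k = {xs. set xs \<subseteq> (UNIV::bool set) \<and> length xs = k}"
    by (auto simp: rand_strings_def)
  then show ?thesis using finite_lists_length_eq[of "UNIV::bool set" k] by simp
qed

lemma rand_card: "card (rand_strings k) = 2 ^ k"
proof -
  have "rand_strings k = {xs. set xs \<subseteq> (UNIV::bool set) \<and> length xs = k}"
    by (auto simp: rand_strings_def)
  then show ?thesis using card_lists_length_eq[of "UNIV::bool set" k] by simp
qed

lemma acc_all:
  assumes "acc_prob V r x p = 1" "\<rho> \<in> rand_strings (r (length x))"
  shows "snd (V x \<rho>) (restrict p (fst (V x \<rho>)))"
proof -
  let ?R = "rand_strings (r (length x))"
  let ?A = "{\<rho> \<in> ?R. snd (V x \<rho>) (restrict p (fst (V x \<rho>)))}"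
  have "real (card ?A) = 2 ^ r (length x)" using assms(1) by (simp add: acc_prob_def)
  then have "real (card ?A) = real (card ?R)" by (simp add: rand_card)
  then have "card ?A = card ?R" by (simp only: of_nat_eq_iff)
  then have "?A = ?R" by (intro card_subset_eq[OF rand_fin]) auto
  then show ?thesis using assms(2) by blast
qed

definition wlk :: "nat \<Rightarrow> bool list \<Rightarrow> bool list \<Rightarrow> nat \<Rightarrow> bool list" where
  "wlk m s g j = map (\<lambda>i. if i < j then g ! i else s ! i) [0..<m]"

lemma wlk0: "length s = m \<Longrightarrow> wlk m s g 0 = s"
  unfolding wlk_def using map_nth[of s] by simp

lemma wlkm: "length g = m \<Longrightarrow> wlk m s g m = g"
proof -
  assume "length g = m"
  have "wlk m s g m = map (\<lambda>i. g ! i) [0..<m]" unfolding wlk_def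
    by (rule map_cong) auto
  then show ?thesis using \<open>length g = m\<close> map_nth[of g] by simp
qed

lemma wlk_ham: "hamming (wlk m s g (t - K)) (wlk m s g (Suc t - K)) \<le> 1"
proof -
  have "{i. i < length (wlk m s g (t - K)) \<and> wlk m s g (t - K) ! i \<noteq> wlk m s g (Suc t - K) ! i}
        \<subseteq> {t - K}" (is "?A \<subseteq> _")
    unfolding wlk_def by auto
  then have "card ?A \<le> card {t - K}" by (intro card_mono) simp_all
  then show ?thesis unfolding hamming_def by simp
qed

theorem mainTheorem5:
  fixes V :: verifier and r q l :: "nat \<Rightarrow> nat"
  assumes wf: "wf_verifier V r q l"
    and r_log: "\<exists>C N. \<forall>n\<ge>N. real (r n) \<le> C * log 2 (real n)"
    and q_const: "\<exists>C. \<forall>n. q n \<le> C"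
    and l_poly: "\<exists>c k. \<forall>n. l n \<le> c * n ^ k + c"
  shows "\<exists>c>0. \<exists>N. \<forall>x \<pi>s \<pi>g. length x \<ge> N \<longrightarrow>
           length \<pi>s = l (length x) \<longrightarrow> length \<pi>g = l (length x) \<longrightarrow>
           acc_prob V r x \<pi>s = 1 \<longrightarrow> acc_prob V r x \<pi>g = 1 \<longrightarrow>
           (\<exists>ps. reconf_seq (l (length x)) \<pi>s \<pi>g ps \<and>
                 seq_acc_prob V r x ps > 1 - 1 / 2 powr (c * real (length x)))"
proof (intro exI[of _ 1] conjI exI[of _ 0] allI impI)
  show "(0::real) < 1" by simp
  fix x \<pi>s \<pi>g
  assume ls: "length \<pi>s = l (length x)" and lg: "length \<pi>g = l (length x)"
    and as: "acc_prob V r x \<pi>s = 1" and ag: "acc_prob V r x \<pi>g = 1"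
  define m where "m = l (length x)"
  define n where "n = length x"
  define K where "K = m * 2 ^ n"
  define ps where "ps = map (\<lambda>t. wlk m \<pi>s \<pi>g (t - K)) [0..<K + m + 1]"
  have len: "length ps = K + m + 1" by (simp add: ps_def)
  have nth: "t < K + m + 1 \<Longrightarrow> ps ! t = wlk m \<pi>s \<pi>g (t - K)" for t
    by (simp add: ps_def del: upt_Suc)
  have "reconf_seq m \<pi>s \<pi>g ps"
    unfolding reconf_seq_def
  proof (intro conjI ballI allI impI)
    show "ps \<noteq> []" using len by auto
    show "hd ps = \<pi>s" using nth[of 0] wlk0[OF ls[folded m_def]] len
      by (simp add: hd_conv_nth \<open>ps \<noteq> []\<close>)
    show "last ps = \<pi>g" using nth[of "K+m"] wlkm[OF lg[folded m_def]] len
      by (simp add: last_conv_nth \<open>ps \<noteq> []\<close>)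
    show "length p = m" if "p \<in> set ps" for p using that by (auto simp: ps_def wlk_def)
    show "hamming (ps ! t) (ps ! Suc t) \<le> 1" if "Suc t < length ps" for t
      using that len nth[of t] nth[of "Suc t"] wlk_ham[of m \<pi>s \<pi>g t K] by simp
  qed
  then have rc: "reconf_seq (l (length x)) \<pi>s \<pi>g ps" by (simp add: m_def)
  let ?R = "rand_strings (r n)"
  let ?S = "{(t, \<rho>). t < length ps \<and> \<rho> \<in> rand_strings (r (length x)) \<and>
                 snd (V x \<rho>) (restrict (ps ! t) (fst (V x \<rho>)))}"
  have sub1: "{0..<K+1} \<times> ?R \<subseteq> ?S"
  proof clarify
    fix t \<rho> assume "t \<in> {0..<K+1}" "\<rho> \<in> ?R"
    then have "ps ! t = \<pi>s" "t < length ps" using nth[of t] wlk0[OF ls[folded m_def]] len by auto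
    then show "t < length ps \<and> \<rho> \<in> rand_strings (r (length x)) \<and>
                 snd (V x \<rho>) (restrict (ps ! t) (fst (V x \<rho>)))"
      using acc_all[OF as] \<open>\<rho> \<in> ?R\<close> n_def by auto
  qed
  have sub2: "?S \<subseteq> {0..<length ps} \<times> ?R" using n_def by auto
  have fin: "finite ?S" by (rule finite_subset[OF sub2]) (simp add: rand_fin)
  have "card ({0..<K+1} \<times> ?R) \<le> card ?S" by (rule card_mono[OF fin sub1])
  then have c: "(K+1) * 2 ^ r n \<le> card ?S" by (simp add: card_cartesian_product rand_card)
  have p: "(0::real) < 2 ^ r n" by simp
  have "real (K+1) / real (K+m+1) \<le> seq_acc_prob V r x ps"
  proof -
    have "real ((K+1) * 2 ^ r n) \<le> real (card ?S)" using c by linarith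
    then have "real ((K+1) * 2 ^ r n) / (real (K+m+1) * 2 ^ r n) \<le> real (card ?S) / (real (K+m+1) * 2 ^ r n)"
      by (intro divide_right_mono) auto
    moreover have "real ((K+1) * 2 ^ r n) / (real (K+m+1) * 2 ^ r n) = real (K+1) / real (K+m+1)"
    proof -
      have cc: "\<And>a b c::real. c \<noteq> 0 \<Longrightarrow> (a*c)/(b*c) = a/b" by simp
      have "real ((K+1) * 2 ^ r n) = real (K+1) * 2 ^ r n" by (simp only: of_nat_mult of_nat_power of_nat_numeral)
      then show ?thesis using cc[of "2 ^ r n" "real (K+1)" "real (K+m+1)"] by simp
    qed
    ultimately show ?thesis unfolding seq_acc_prob_def len n_def by simp
  qed
  moreover have "1 - 1 / 2 powr (1 * real (length x)) < real (K+1) / real (K+m+1)"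
  proof -
    have e: "(2::real) powr (1 * real (length x)) = 2 ^ n" by (simp add: n_def powr_realpow)
    have pn: "(0::real) < 2 ^ n" by simp
    have "real (K + m + 1) * (2 ^ n - 1) < real (K+1) * 2 ^ n"
      unfolding K_def using pn by (simp add: algebra_simps)
    then have "(2 ^ n - 1) / 2 ^ n < real (K+1) / real (K+m+1)"
      using pn by (simp add: divide_simps mult.commute)
    moreover have "1 - 1 / (2::real) ^ n = (2 ^ n - 1) / 2 ^ n" using pn by (simp add: divide_simps)
    ultimately show ?thesis using e by simp
  qed
  ultimately have "1 - 1 / 2 powr (1 * real (length x)) < seq_acc_prob V r x ps" by linarith
  then show "\<exists>ps. reconf_seq (l (length x)) \<pi>s \<pi>g ps \<and>
                 seq_acc_prob V r x ps > 1 - 1 / 2 powr (1 * real (length x))" using rc by blast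
qed

end
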